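(* Let $A=(a_{ij})$ be an irreducible $d\times d$ matrix with entries in $\{0,1\}$, let $\rho$ be its Perron–Frobenius eigenvalue and $\mathbf v=(v_1,\dots,v_d)$ a positive probability vector with $A\mathbf v=\rho\mathbf v$. For $\mathbf z=(z_1,\dots,z_d)$ let $A(\mathbf z)$ be the matrix obtained from $A$ by replacing each entry $1$ in the $j$-th column by $z_j$. For $\mathbf q\in M_d^*=\{\mathbf q\in\mathbb R^d: q_i>0\ \forall i,\ \sum_i q_i=1\}$ define $\mathbf s(\mathbf q)=(s_1,\dots,s_d)$ by $s_j=\dfrac{q_j}{v_j\sum_{i=1}^d q_ia_{ij}/v_i}$. Then $$\det\big(I-A(\mathbf s(\mathbf q))\big)=0\quad\text{for all }\mathbf q\in M_d^*.$$
   Context: $I$ is the $d\times d$ identity matrix. *)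

theory Defs
  imports "HOL-Analysis.Analysis"
begin

fun mat_pow :: "('a::semiring_1)^'n^'n \<Rightarrow> nat \<Rightarrow> 'a^'n^'n" where
  "mat_pow A 0 = mat 1"
| "mat_pow A (Suc k) = A ** mat_pow A k"

definition irreducible_mat :: "real^'n^'n \<Rightarrow> bool" where
  "irreducible_mat A \<longleftrightarrow> (\<forall>i j. A $ i $ j \<ge> 0) \<and>
     (\<forall>i j. \<exists>k\<ge>1. mat_pow A k $ i $ j > 0)"

text \<open>Spectral radius (for an irreducible nonnegative matrix this is the
  Perron-Frobenius eigenvalue): max modulus of a complex eigenvalue.\<close>
definition perron_root :: "real^'n^'n \<Rightarrow> real" where
  "perron_root A = Max {cmod l | l. \<exists>x::complex^'n. x \<noteq> 0 \<and>
      (\<chi> i j. complex_of_real (A $ i $ j)) *v x = l *s x}"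

definition subst_mat :: "real^'n^'n \<Rightarrow> real^'n \<Rightarrow> real^'n^'n" where
  "subst_mat A z = (\<chi> i j. if A $ i $ j = 1 then z $ j else A $ i $ j)"

definition s_vec :: "real^'n^'n \<Rightarrow> real^'n \<Rightarrow> real^'n \<Rightarrow> real^'n" where
  "s_vec A v q = (\<chi> j. q $ j / (v $ j * (\<Sum>i\<in>UNIV. q $ i * A $ i $ j / v $ i)))"

end

theory Submission
  imports Defs
begin

lemma mat_pow_Suc_right: "mat_pow A (Suc k) = mat_pow A k ** A"
proof (induction k)
  case 0 then show ?case by (simp add: matrix_mul_lid matrix_mul_rid)
next
  case (Suc k)
  have "mat_pow A (Suc (Suc k)) = A ** (mat_pow A k ** A)" using Suc by simp
  also have "\<dots> = (A ** mat_pow A k) ** A" by (simp add: matrix_mul_assoc)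
  finally show ?case by simp
qed

lemma col_nonzero:
  assumes "irreducible_mat A"
  shows "\<exists>i. A $ i $ j \<noteq> 0"
proof (rule ccontr)
  assume "\<not> ?thesis"
  hence z: "\<forall>i. A $ i $ j = 0" by auto
  obtain k where k: "k \<ge> 1" "mat_pow A k $ j $ j > 0"
    using assms unfolding irreducible_mat_def by blast
  then obtain m where m: "k = Suc m" by (cases k) auto
  have "mat_pow A k $ j $ j = (mat_pow A m ** A) $ j $ j"
    using m mat_pow_Suc_right by metis
  also have "\<dots> = 0" using z by (simp add: matrix_matrix_mult_def)
  finally show False using k by simp
qed

theorem corollary2:
  fixes A :: "real^'n^'n" and v q :: "real^'n" and \<rho> :: real
  assumes "\<forall>i j. A $ i $ j \<in> {0, 1}"
    and "irreducible_mat A"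
    and "\<rho> = perron_root A"
    and "\<forall>i. v $ i > 0" and "(\<Sum>i\<in>UNIV. v $ i) = 1"
    and "A *v v = \<rho> *s v"
    and "\<forall>i. q $ i > 0" and "(\<Sum>i\<in>UNIV. q $ i) = 1"
  shows "det (mat 1 - subst_mat A (s_vec A v q)) = 0"
proof -
  define M where "M = mat 1 - subst_mat A (s_vec A v q)"
  define w :: "real^'n" where "w = (\<chi> i. q $ i / v $ i)"
  have S: "(\<Sum>i\<in>UNIV. q $ i * A $ i $ j / v $ i) > 0" for j
  proof -
    obtain i0 where i0: "A $ i0 $ j \<noteq> 0" using col_nonzero[OF assms(2)] by blast
    have nn: "\<forall>i\<in>UNIV. q $ i * A $ i $ j / v $ i \<ge> 0"
      using assms(1,4,7) by (metis insert_iff singletonD div_0 mult_zero_right mult_cancel_left2 less_eq_real_def divide_pos_pos)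
    have "q $ i0 * A $ i0 $ j / v $ i0 > 0" using i0 assms(1,4,7) by (metis insert_iff singletonD mult_cancel_left2 divide_pos_pos)
    then show ?thesis using nn by (meson finite UNIV_I sum_pos2)
  qed
  have "transpose M *v w = 0"
  proof (rule vec_eq_iff[THEN iffD2], rule allI)
    fix j
    have e: "subst_mat A (s_vec A v q) $ i $ j = A $ i $ j * s_vec A v q $ j" for i
      using assms(1) unfolding subst_mat_def by (auto)
    have "(transpose M *v w) $ j = w $ j - (\<Sum>i\<in>UNIV. w $ i * (A $ i $ j * s_vec A v q $ j))"
    proof -
      have "(transpose M *v w) $ j = (\<Sum>i\<in>UNIV. M $ i $ j * w $ i)"
        unfolding transpose_matrix_vector by (simp add: vector_matrix_mult_def mult.commute)
      also have "\<dots> = (\<Sum>i\<in>UNIV. (if i = j then w $ i else 0) - w $ i * (A $ i $ j * s_vec A v q $ j))"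
        unfolding M_def by (intro sum.cong) (auto simp: mat_def e algebra_simps)
      also have "\<dots> = w $ j - (\<Sum>i\<in>UNIV. w $ i * (A $ i $ j * s_vec A v q $ j))"
        by (simp add: sum_subtractf)
      finally show ?thesis .
    qed
    also have "(\<Sum>i\<in>UNIV. w $ i * (A $ i $ j * s_vec A v q $ j)) = s_vec A v q $ j * (\<Sum>i\<in>UNIV. q $ i * A $ i $ j / v $ i)"
      unfolding w_def by (simp add: sum_distrib_left algebra_simps)
    also have "\<dots> = w $ j"
      using S[of j] assms(4) unfolding s_vec_def w_def by (simp add: field_simps)
    finally show "(transpose M *v w) $ j = 0 $ j" by simp
  qed
  moreover have "w \<noteq> 0"
  proof
    assume "w = 0"
    then have "w $ undefined = 0" by simp
    then show False using assms(4,7) unfolding w_def by (metis vec_lambda_beta less_irrefl divide_pos_pos)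
  qed
  ultimately have "\<not> invertible (transpose M)"
    using matrix_left_invertible_ker invertible_def by blast
  then show ?thesis unfolding M_def[symmetric] by (simp add: invertible_det_nz det_transpose)
qed

end
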